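(* Let $Q_{[n]}=\sum_{\{i,j\}\subseteq[n]}\Gamma_{\{i,j\}}^2$, the sum being over all 2-element subsets of $[n]$. Then $[Q_{[n]},\Gamma_A]=0$ for every $A\subseteq[n]$.
   Context: Fix $n\ge1$ and real parameters $\mu_1,\dots,\mu_n>0$; write $[n]=\{1,\dots,n\}$. For $i\in[n]$, $r_i$ is the reflection $(r_if)(x)=f(x_1,\dots,-x_i,\dots,x_n)$ and $T_i=\partial_{x_i}+\frac{\mu_i}{x_i}(1-r_i)$. $\mathcal{C}\ell_n$ is generated by $e_1,\dots,e_n$ with $e_ie_j+e_je_i=-2\delta_{ij}$, $V$ is a fixed left $\mathcal{C}\ell_n$-module, and operators act on $\mathcal{P}(\mathbb{R}^n)\otimes V$ with $x_i,T_i,r_i$ acting on the polynomial factor and $e_i$ on $V$. For $A\subseteq[n]$: $\underline{D}_A=\sum_{i\in A}e_iT_i$, $\underline{x}_A=\sum_{i\in A}e_ix_i$, $\underline{S}_A=\frac12([\underline{x}_A,\underline{D}_A]-1)$, $\Gamma_A=\underline{S}_A\prod_{i\in A}r_i$ (empty sums $0$, empty products $1$). *)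

theory Defs
  imports "HOL-Analysis.Analysis"
begin

text \<open>Elements of P(R^n) tensor V are represented by their coefficient functions:
  F alpha is the V-valued coefficient of the monomial x^alpha, alpha :: nat => nat an
  exponent vector (only alpha 1, ..., alpha n are relevant; polynomials in n variables
  are those F with finite support on exponent vectors vanishing outside {1..n}).\<close>

type_synonym 'v pv = "(nat \<Rightarrow> nat) \<Rightarrow> 'v"

definition is_poly :: "nat \<Rightarrow> ('v::zero) pv \<Rightarrow> bool" where
  "is_poly n F \<longleftrightarrow> finite {\<alpha>. F \<alpha> \<noteq> 0} \<and> (\<forall>\<alpha>. F \<alpha> \<noteq> 0 \<longrightarrow> (\<forall>i. i \<notin> {1..n} \<longrightarrow> \<alpha> i = 0))"

definition mult_x :: "nat \<Rightarrow> ('v::zero) pv \<Rightarrow> 'v pv" where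
  "mult_x i F = (\<lambda>\<alpha>. if \<alpha> i = 0 then 0 else F (\<alpha>(i := \<alpha> i - 1)))"

text \<open>division by x_i (exact on polynomials divisible by x_i)\<close>
definition div_x :: "nat \<Rightarrow> 'v pv \<Rightarrow> 'v pv" where
  "div_x i F = (\<lambda>\<alpha>. F (\<alpha>(i := Suc (\<alpha> i))))"

definition dx :: "nat \<Rightarrow> ('v::real_vector) pv \<Rightarrow> 'v pv" where
  "dx i F = (\<lambda>\<alpha>. real (Suc (\<alpha> i)) *\<^sub>R F (\<alpha>(i := Suc (\<alpha> i))))"

definition refl :: "nat \<Rightarrow> ('v::real_vector) pv \<Rightarrow> 'v pv" where
  "refl i F = (\<lambda>\<alpha>. ((-1::real) ^ (\<alpha> i)) *\<^sub>R F \<alpha>)"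

definition reflA :: "nat set \<Rightarrow> ('v::real_vector) pv \<Rightarrow> 'v pv" where
  "reflA A F = (\<lambda>\<alpha>. ((-1::real) ^ (\<Sum>i\<in>A. \<alpha> i)) *\<^sub>R F \<alpha>)"

definition dunkl :: "(nat \<Rightarrow> real) \<Rightarrow> nat \<Rightarrow> ('v::real_vector) pv \<Rightarrow> 'v pv" where
  "dunkl \<mu> i F = (\<lambda>\<alpha>. dx i F \<alpha> + \<mu> i *\<^sub>R div_x i (\<lambda>\<beta>. F \<beta> - refl i F \<beta>) \<alpha>)"

definition dirac :: "(nat \<Rightarrow> real) \<Rightarrow> (nat \<Rightarrow> 'v \<Rightarrow> 'v) \<Rightarrow> nat set \<Rightarrow> ('v::real_vector) pv \<Rightarrow> 'v pv" where
  "dirac \<mu> e A F = (\<lambda>\<alpha>. \<Sum>i\<in>A. e i (dunkl \<mu> i F \<alpha>))"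

definition vecx :: "(nat \<Rightarrow> 'v \<Rightarrow> 'v) \<Rightarrow> nat set \<Rightarrow> ('v::real_vector) pv \<Rightarrow> 'v pv" where
  "vecx e A F = (\<lambda>\<alpha>. \<Sum>i\<in>A. e i (mult_x i F \<alpha>))"

definition SA :: "(nat \<Rightarrow> real) \<Rightarrow> (nat \<Rightarrow> 'v \<Rightarrow> 'v) \<Rightarrow> nat set \<Rightarrow> ('v::real_vector) pv \<Rightarrow> 'v pv" where
  "SA \<mu> e A F = (\<lambda>\<alpha>. (1/2::real) *\<^sub>R
      (vecx e A (dirac \<mu> e A F) \<alpha> - dirac \<mu> e A (vecx e A F) \<alpha> - F \<alpha>))"

definition GammaA :: "(nat \<Rightarrow> real) \<Rightarrow> (nat \<Rightarrow> 'v \<Rightarrow> 'v) \<Rightarrow> nat set \<Rightarrow> ('v::real_vector) pv \<Rightarrow> 'v pv" where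
  "GammaA \<mu> e A F = SA \<mu> e A (reflA A F)"

definition Qn :: "(nat \<Rightarrow> real) \<Rightarrow> (nat \<Rightarrow> 'v \<Rightarrow> 'v) \<Rightarrow> nat \<Rightarrow> ('v::real_vector) pv \<Rightarrow> 'v pv" where
  "Qn \<mu> e n F = (\<lambda>\<alpha>. \<Sum>B\<in>{B. B \<subseteq> {1..n} \<and> card B = 2}. GammaA \<mu> e B (GammaA \<mu> e B F) \<alpha>)"

end

theory Submission
  imports Defs
begin


definition lin :: "('v::real_vector pv \<Rightarrow> 'v pv) \<Rightarrow> bool" where
 "lin f \<longleftrightarrow> (\<forall>F G. f (\<lambda>\<alpha>. F \<alpha> + G \<alpha>) = (\<lambda>\<alpha>. f F \<alpha> + f G \<alpha>)) \<and> (\<forall>c F. f (\<lambda>\<alpha>. c *\<^sub>R F \<alpha>) = (\<lambda>\<alpha>. c *\<^sub>R f F \<alpha>))"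

lemma lin_add: "lin f \<Longrightarrow> f (\<lambda>\<alpha>. F \<alpha> + G \<alpha>) = (\<lambda>\<alpha>. f F \<alpha> + f G \<alpha>)"
  unfolding lin_def apply (erule conjE) apply (drule spec[of _ F]) apply (drule spec[of _ G]) by assumption

lemma lin_scale: "lin f \<Longrightarrow> f (\<lambda>\<alpha>. c *\<^sub>R F \<alpha>) = (\<lambda>\<alpha>. c *\<^sub>R f F \<alpha>)"
  unfolding lin_def apply (erule conjE) apply (drule spec[of _ c], drule spec[of _ F]) back by assumption

lemma lin_zero: "lin f \<Longrightarrow> f (\<lambda>\<alpha>. 0) = (\<lambda>\<alpha>. 0)"
  using lin_scale[of f 0 "\<lambda>\<alpha>. 0"] by simp

lemma lin_uminus: "lin f \<Longrightarrow> f (\<lambda>\<alpha>. - F \<alpha>) = (\<lambda>\<alpha>. - f F \<alpha>)"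
  using lin_scale[of f "-1" F] by simp

lemma lin_minus: "lin f \<Longrightarrow> f (\<lambda>\<alpha>. F \<alpha> - G \<alpha>) = (\<lambda>\<alpha>. f F \<alpha> - f G \<alpha>)"
  using lin_add[of f F "\<lambda>\<alpha>. - G \<alpha>"] lin_uminus[of f G] by simp

typedef (overloaded) ('v::real_vector) linop = "{f :: 'v pv \<Rightarrow> 'v pv. lin f}"
  morphisms rep Abs_linop
  by (rule exI[of _ "\<lambda>F. F"]) (simp add: lin_def)

setup_lifting type_definition_linop

lemma lin_closed:
  assumes a: "lin f" "lin g"
  shows "lin (\<lambda>F \<alpha>. f F \<alpha> + g F \<alpha>)" "lin (\<lambda>F \<alpha>. f F \<alpha> - g F \<alpha>)" "lin (\<lambda>F \<alpha>. - f F \<alpha>)"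
    "lin (\<lambda>F \<alpha>. c *\<^sub>R f F \<alpha>)" "lin (\<lambda>F. f (g F))"
  unfolding lin_def
proof (safe)
  fix F G
  show "(\<lambda>\<alpha>. f (\<lambda>\<alpha>. F \<alpha> + G \<alpha>) \<alpha> + g (\<lambda>\<alpha>. F \<alpha> + G \<alpha>) \<alpha>) = (\<lambda>\<alpha>. f F \<alpha> + g F \<alpha> + (f G \<alpha> + g G \<alpha>))"
    by (simp add: lin_add[OF a(1), of F G] lin_add[OF a(2), of F G] algebra_simps)
  show "(\<lambda>\<alpha>. f (\<lambda>\<alpha>. F \<alpha> + G \<alpha>) \<alpha> - g (\<lambda>\<alpha>. F \<alpha> + G \<alpha>) \<alpha>) = (\<lambda>\<alpha>. f F \<alpha> - g F \<alpha> + (f G \<alpha> - g G \<alpha>))"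
    by (simp add: lin_add[OF a(1), of F G] lin_add[OF a(2), of F G] algebra_simps)
  show "(\<lambda>\<alpha>. - f (\<lambda>\<alpha>. F \<alpha> + G \<alpha>) \<alpha>) = (\<lambda>\<alpha>. - f F \<alpha> + - f G \<alpha>)"
    by (simp add: lin_add[OF a(1), of F G] algebra_simps)
  show "(\<lambda>\<alpha>. c *\<^sub>R f (\<lambda>\<alpha>. F \<alpha> + G \<alpha>) \<alpha>) = (\<lambda>\<alpha>. c *\<^sub>R f F \<alpha> + c *\<^sub>R f G \<alpha>)"
    by (simp add: lin_add[OF a(1), of F G] algebra_simps)
  show "f (g (\<lambda>\<alpha>. F \<alpha> + G \<alpha>)) = (\<lambda>\<alpha>. f (g F) \<alpha> + f (g G) \<alpha>)"
    by (simp add: lin_add[OF a(2), of F G] lin_add[OF a(1), of "g F" "g G"])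
next
  fix d F
  show "(\<lambda>\<alpha>. f (\<lambda>\<alpha>. d *\<^sub>R F \<alpha>) \<alpha> + g (\<lambda>\<alpha>. d *\<^sub>R F \<alpha>) \<alpha>) = (\<lambda>\<alpha>. d *\<^sub>R (f F \<alpha> + g F \<alpha>))"
    by (simp add: lin_scale[OF a(1), of d F] lin_scale[OF a(2), of d F] algebra_simps)
  show "(\<lambda>\<alpha>. f (\<lambda>\<alpha>. d *\<^sub>R F \<alpha>) \<alpha> - g (\<lambda>\<alpha>. d *\<^sub>R F \<alpha>) \<alpha>) = (\<lambda>\<alpha>. d *\<^sub>R (f F \<alpha> - g F \<alpha>))"
    by (simp add: lin_scale[OF a(1), of d F] lin_scale[OF a(2), of d F] algebra_simps)
  show "(\<lambda>\<alpha>. - f (\<lambda>\<alpha>. d *\<^sub>R F \<alpha>) \<alpha>) = (\<lambda>\<alpha>. d *\<^sub>R - f F \<alpha>)"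
    by (simp add: lin_scale[OF a(1), of d F] algebra_simps)
  show "(\<lambda>\<alpha>. c *\<^sub>R f (\<lambda>\<alpha>. d *\<^sub>R F \<alpha>) \<alpha>) = (\<lambda>\<alpha>. d *\<^sub>R c *\<^sub>R f F \<alpha>)"
    by (simp add: lin_scale[OF a(1), of d F] algebra_simps)
  show "f (g (\<lambda>\<alpha>. d *\<^sub>R F \<alpha>)) = (\<lambda>\<alpha>. d *\<^sub>R f (g F) \<alpha>)"
    by (simp add: lin_scale[OF a(2), of d F] lin_scale[OF a(1), of d "g F"])
qed

instantiation linop :: (real_vector) "{real_algebra, monoid_mult}"
begin
lift_definition zero_linop :: "'a linop" is "\<lambda>F \<alpha>. 0" by (simp add: lin_def)
lift_definition one_linop :: "'a linop" is "\<lambda>F. F" by (simp add: lin_def)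
lift_definition plus_linop :: "'a linop \<Rightarrow> 'a linop \<Rightarrow> 'a linop" is "\<lambda>f g F \<alpha>. f F \<alpha> + g F \<alpha>"
  by (rule lin_closed)
lift_definition minus_linop :: "'a linop \<Rightarrow> 'a linop \<Rightarrow> 'a linop" is "\<lambda>f g F \<alpha>. f F \<alpha> - g F \<alpha>"
  by (rule lin_closed)
lift_definition uminus_linop :: "'a linop \<Rightarrow> 'a linop" is "\<lambda>f F \<alpha>. - f F \<alpha>"
  by (rule lin_closed(3), assumption, assumption)
lift_definition scaleR_linop :: "real \<Rightarrow> 'a linop \<Rightarrow> 'a linop" is "\<lambda>c f F \<alpha>. c *\<^sub>R f F \<alpha>"
  by (rule lin_closed(4), assumption, assumption)
lift_definition times_linop :: "'a linop \<Rightarrow> 'a linop \<Rightarrow> 'a linop" is "\<lambda>f g F. f (g F)"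
  by (rule lin_closed)
instance
proof
  fix a b c :: "'a linop" and r s :: real
  show "a + b + c = a + (b + c)" by transfer (simp add: algebra_simps)
  show "a + b = b + a" by transfer (simp add: algebra_simps)
  show "0 + a = a" by transfer simp
  show "- a + a = 0" by transfer simp
  show "a - b = a + - b" by transfer simp
  show "r *\<^sub>R (a + b) = r *\<^sub>R a + r *\<^sub>R b" by transfer (simp add: algebra_simps)
  show "(r + s) *\<^sub>R a = r *\<^sub>R a + s *\<^sub>R a" by transfer (simp add: algebra_simps)
  show "r *\<^sub>R s *\<^sub>R a = (r * s) *\<^sub>R a" by transfer simp
  show "1 *\<^sub>R a = a" by transfer simp
  show "a * b * c = a * (b * c)" by transfer simp
  show "(a + b) * c = a * c + b * c" by transfer simp
  show "a * (b + c) = a * b + a * c" by transfer (rule ext, erule lin_add)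
  show "r *\<^sub>R a * b = r *\<^sub>R (a * b)" by transfer simp
  show "a * r *\<^sub>R b = r *\<^sub>R (a * b)" by transfer (rule ext, erule lin_scale)
  show "1 * a = a" by transfer simp
  show "a * 1 = a" by transfer simp
qed
end

lemma rep_sum: "rep (sum f A) F \<alpha> = (\<Sum>i\<in>A. rep (f i) F \<alpha>)"
  by (induct A rule: infinite_finite_induct) (simp_all add: zero_linop.rep_eq plus_linop.rep_eq)


lemma dunkl_eq: "dunkl \<mu> i F \<alpha> = (real (Suc (\<alpha> i)) + \<mu> i * (1 + (-1) ^ (\<alpha> i))) *\<^sub>R F (\<alpha>(i := Suc (\<alpha> i)))"
  by (simp add: dunkl_def dx_def div_x_def refl_def algebra_simps)

lemma lin_mult_x: "lin (mult_x i)"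
  unfolding lin_def mult_x_def by (auto simp: fun_eq_iff)

lemma lin_dunkl: "lin (dunkl \<mu> i)"
  unfolding lin_def by (auto simp: fun_eq_iff dunkl_eq algebra_simps)

lemma lin_refl: "lin (refl i)"
  unfolding lin_def by (auto simp: fun_eq_iff refl_def algebra_simps)

lemma lin_reflA: "lin (reflA A)"
  unfolding lin_def by (auto simp: fun_eq_iff reflA_def algebra_simps)

definition eop :: "('v::real_vector \<Rightarrow> 'v) \<Rightarrow> 'v pv \<Rightarrow> 'v pv" where
  "eop f = (if linear f then (\<lambda>F \<alpha>. f (F \<alpha>)) else (\<lambda>F \<alpha>. 0))"

lemma lin_eop: "lin (eop f)"
  unfolding lin_def eop_def by (auto simp: fun_eq_iff linear_add linear_scale)

lift_definition Xo :: "nat \<Rightarrow> 'v::real_vector linop" is mult_x by (rule lin_mult_x)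
lift_definition To :: "(nat \<Rightarrow> real) \<Rightarrow> nat \<Rightarrow> 'v::real_vector linop" is dunkl by (rule lin_dunkl)
lift_definition Ro :: "nat \<Rightarrow> 'v::real_vector linop" is refl by (rule lin_refl)
lift_definition RAo :: "nat set \<Rightarrow> 'v::real_vector linop" is reflA by (rule lin_reflA)
lift_definition Eo :: "('v::real_vector \<Rightarrow> 'v) \<Rightarrow> 'v linop" is eop by (rule lin_eop)

lemma rep_times: "rep (a * b) = (\<lambda>F. rep a (rep b F))"
  by (simp add: times_linop.rep_eq)

lemma linop_eqI: "(\<And>F \<alpha>. rep a F \<alpha> = rep b F \<alpha>) \<Longrightarrow> a = b"
  by (metis rep_inject ext)

lemma XX: "Xo i * Xo j = (Xo j * Xo i :: 'v::real_vector linop)"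
  by (rule linop_eqI) (auto simp: rep_times Xo.rep_eq mult_x_def fun_upd_twist)

lemma TT: "To \<mu> i * To \<mu> j = (To \<mu> j * To \<mu> i :: 'v::real_vector linop)"
  by (rule linop_eqI) (auto simp: rep_times To.rep_eq dunkl_eq fun_upd_twist)

lemma TX: "i \<noteq> j \<Longrightarrow> To \<mu> i * Xo j = (Xo j * To \<mu> i :: 'v::real_vector linop)"
  by (rule linop_eqI) (auto simp: rep_times To.rep_eq Xo.rep_eq dunkl_eq mult_x_def fun_upd_twist)

lemma coll:
  fixes v :: "'v::real_vector"
  shows "a *\<^sub>R v + b *\<^sub>R v = (a+b) *\<^sub>R v" "a *\<^sub>R v + v = (a+1) *\<^sub>R v" "v + a *\<^sub>R v = (1+a) *\<^sub>R v"
    "v + v = 2 *\<^sub>R v" "a *\<^sub>R v - b *\<^sub>R v = (a-b) *\<^sub>R v"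
    "a *\<^sub>R v + (b *\<^sub>R v + w) = (a+b) *\<^sub>R v + w" "v + (b *\<^sub>R v + w) = (1+b) *\<^sub>R v + w" "a *\<^sub>R v + (v + w) = (a+1) *\<^sub>R v + w"
    "v + (v + w) = 2 *\<^sub>R v + w"
  by (simp_all add: scaleR_add_left scaleR_diff_left scaleR_2)

lemma TXi: "To \<mu> i * Xo i = (Xo i * To \<mu> i + 1 + (2 * \<mu> i) *\<^sub>R Ro i :: 'v::real_vector linop)"
proof (rule linop_eqI)
  fix F :: "'v pv" and \<alpha>
  show "rep (To \<mu> i * Xo i) F \<alpha> = rep (Xo i * To \<mu> i + 1 + (2 * \<mu> i) *\<^sub>R Ro i) F \<alpha>"
  proof (cases "\<alpha> i")
    case 0 then show ?thesis
      by (simp add: rep_times To.rep_eq Xo.rep_eq Ro.rep_eq plus_linop.rep_eq one_linop.rep_eq scaleR_linop.rep_eq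
          dunkl_eq mult_x_def refl_def algebra_simps fun_upd_idem)
  next
    case (Suc b) then show ?thesis
      by (simp add: rep_times To.rep_eq Xo.rep_eq Ro.rep_eq plus_linop.rep_eq one_linop.rep_eq scaleR_linop.rep_eq
          dunkl_eq mult_x_def refl_def fun_upd_idem coll)
        (rule disjI1, simp add: algebra_simps)
  qed
qed

lemma RR: "Ro i * Ro i = (1 :: 'v::real_vector linop)"
  by (rule linop_eqI) (simp add: rep_times Ro.rep_eq one_linop.rep_eq refl_def power_mult_distrib[symmetric])

lemma RRc: "Ro i * Ro j = (Ro j * Ro i :: 'v::real_vector linop)"
  by (rule linop_eqI) (simp add: rep_times Ro.rep_eq refl_def)

lemma RX: "Ro i * Xo i = - (Xo i * Ro i :: 'v::real_vector linop)"
  by (rule linop_eqI) (auto simp: rep_times Ro.rep_eq Xo.rep_eq uminus_linop.rep_eq refl_def mult_x_def gr0_conv_Suc)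

lemma RT: "Ro i * To \<mu> i = - (To \<mu> i * Ro i :: 'v::real_vector linop)"
  by (rule linop_eqI) (auto simp: rep_times Ro.rep_eq To.rep_eq uminus_linop.rep_eq refl_def dunkl_eq)

lemma RXc: "i \<noteq> j \<Longrightarrow> Ro i * Xo j = (Xo j * Ro i :: 'v::real_vector linop)"
  by (rule linop_eqI) (auto simp: rep_times Ro.rep_eq Xo.rep_eq refl_def mult_x_def)

lemma RTc: "i \<noteq> j \<Longrightarrow> Ro i * To \<mu> j = (To \<mu> j * Ro i :: 'v::real_vector linop)"
  by (rule linop_eqI) (auto simp: rep_times Ro.rep_eq To.rep_eq refl_def dunkl_eq)


lemma sum_upd_in: "finite A \<Longrightarrow> i \<in> A \<Longrightarrow> (\<Sum>j\<in>A. (\<alpha>(i:=v)) j) = v + (\<Sum>j\<in>A-{i}. \<alpha> j)"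
  by (simp add: sum.remove)

lemma sum_upd_notin: "i \<notin> A \<Longrightarrow> (\<Sum>j\<in>A. (\<alpha>(i:=v)) j) = (\<Sum>j\<in>A. \<alpha> j)"
  by (rule sum.cong) auto

lemma sum_if_notin: "i \<notin> A \<Longrightarrow> (\<Sum>x\<in>A. if x = i then v else \<alpha> x) = (\<Sum>j\<in>A. \<alpha> j)"
  by (rule sum.cong) auto

lemma sum_split_in: "finite A \<Longrightarrow> i \<in> A \<Longrightarrow> (\<Sum>j\<in>A. \<alpha> j) = \<alpha> i + (\<Sum>j\<in>A-{i}. \<alpha> j)"
  by (simp add: sum.remove)

lemma RARA: "RAo A * RAo A = (1 :: 'v::real_vector linop)"
  by (rule linop_eqI) (simp add: rep_times RAo.rep_eq one_linop.rep_eq reflA_def power_mult_distrib[symmetric])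

lemma RAX: "finite A \<Longrightarrow> i \<in> A \<Longrightarrow> RAo A * Xo i = - (Xo i * RAo A :: 'v::real_vector linop)"
  by (rule linop_eqI) (auto simp: rep_times RAo.rep_eq Xo.rep_eq uminus_linop.rep_eq reflA_def mult_x_def
      gr0_conv_Suc sum_upd_in sum_split_in[of A i])

lemma RAT: "finite A \<Longrightarrow> i \<in> A \<Longrightarrow> RAo A * To \<mu> i = - (To \<mu> i * RAo A :: 'v::real_vector linop)"
  by (rule linop_eqI) (auto simp: rep_times RAo.rep_eq To.rep_eq uminus_linop.rep_eq reflA_def dunkl_eq
      sum_upd_in sum_split_in[of A i])

lemma RAXc: "i \<notin> A \<Longrightarrow> RAo A * Xo i = (Xo i * RAo A :: 'v::real_vector linop)"
  by (rule linop_eqI) (auto simp: rep_times RAo.rep_eq Xo.rep_eq reflA_def mult_x_def sum_upd_notin sum_if_notin)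

lemma RATc: "i \<notin> A \<Longrightarrow> RAo A * To \<mu> i = (To \<mu> i * RAo A :: 'v::real_vector linop)"
  by (rule linop_eqI) (auto simp: rep_times RAo.rep_eq To.rep_eq reflA_def dunkl_eq sum_upd_notin sum_if_notin)

lemma rep_Eo: "linear f \<Longrightarrow> rep (Eo f) F \<alpha> = f (F \<alpha>)"
  by (simp add: Eo.rep_eq eop_def)

lemma EX: "linear f \<Longrightarrow> Eo f * Xo j = (Xo j * Eo f :: 'v::real_vector linop)"
  by (rule linop_eqI) (auto simp: rep_times rep_Eo Xo.rep_eq mult_x_def linear_0)

lemma ET: "linear f \<Longrightarrow> Eo f * To \<mu> j = (To \<mu> j * Eo f :: 'v::real_vector linop)"
  by (rule linop_eqI) (auto simp: rep_times rep_Eo To.rep_eq dunkl_eq linear_scale)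

lemma ER: "linear f \<Longrightarrow> Eo f * Ro j = (Ro j * Eo f :: 'v::real_vector linop)"
  by (rule linop_eqI) (auto simp: rep_times rep_Eo Ro.rep_eq refl_def linear_scale)

lemma ERA: "linear f \<Longrightarrow> Eo f * RAo A = (RAo A * Eo f :: 'v::real_vector linop)"
  by (rule linop_eqI) (auto simp: rep_times rep_Eo RAo.rep_eq reflA_def linear_scale)

lemma EE: "linear f \<Longrightarrow> linear g \<Longrightarrow> (\<forall>v. f (g v) + g (f v) = c *\<^sub>R v) \<Longrightarrow>
   Eo f * Eo g + Eo g * Eo f = c *\<^sub>R (1 :: 'v::real_vector linop)"
  by (rule linop_eqI) (auto simp: rep_times rep_Eo plus_linop.rep_eq scaleR_linop.rep_eq one_linop.rep_eq)

lemma EE0: "linear f \<Longrightarrow> linear g \<Longrightarrow> (\<forall>v. f (g v) + g (f v) = 0) \<Longrightarrow>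
   Eo f * Eo g + Eo g * Eo f = (0 :: 'v::real_vector linop)"
  by (rule linop_eqI) (auto simp: rep_times rep_Eo plus_linop.rep_eq zero_linop.rep_eq)



lemma osp:
  fixes x D Z :: "'a::{real_algebra, monoid_mult}"
  assumes Dx: "D * x = Z - x * D" and xZ: "x * Z = Z * x + 2 *\<^sub>R x" and DZ: "D * Z = Z * D - 2 *\<^sub>R D"
  shows "(x*D - D*x - 1) * x = - (x * (x*D - D*x - 1))"
    "(x*D - D*x - 1) * D = - (D * (x*D - D*x - 1))"
    "(x*D - D*x - 1) * (x*D - D*x - 1) = 2 *\<^sub>R (x*D - D*x - 1) + (Z + 2 *\<^sub>R 1) * (Z + 2 *\<^sub>R 1) - 1 - 4 *\<^sub>R (x*(x*(D*D)))"
proof -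
  have Dx': "D * (x * w) = Z * w - x * (D * w)" for w using Dx by (metis mult.assoc left_diff_distrib)
  have xZ': "x * (Z * w) = Z * (x * w) + 2 *\<^sub>R (x * w)" for w using xZ by (metis mult.assoc distrib_right mult_scaleR_left)
  have DZ': "D * (Z * w) = Z * (D * w) - 2 *\<^sub>R (D * w)" for w using DZ by (metis mult.assoc left_diff_distrib mult_scaleR_left)
  have four: "4 *\<^sub>R w = w + (w + (w + w))" for w :: 'a
    using scaleR_add_left[of 2 2 w] by (simp add: scaleR_2 add.assoc)
  show "(x*D - D*x - 1) * x = - (x * (x*D - D*x - 1))"
    by (simp add: algebra_simps Dx Dx' xZ xZ' scaleR_2)
  show "(x*D - D*x - 1) * D = - (D * (x*D - D*x - 1))"
    by (simp add: algebra_simps Dx Dx' xZ xZ' DZ DZ' scaleR_2)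
  show "(x*D - D*x - 1) * (x*D - D*x - 1) = 2 *\<^sub>R (x*D - D*x - 1) + (Z + 2 *\<^sub>R 1) * (Z + 2 *\<^sub>R 1) - 1 - 4 *\<^sub>R (x*(x*(D*D)))"
    by (simp add: algebra_simps Dx Dx' xZ xZ' DZ DZ' scaleR_2 four)
qed

lemma sum_prod: "(\<Sum>i\<in>A. a i) * (\<Sum>j\<in>B. b j) = (\<Sum>i\<in>A. \<Sum>j\<in>B. a i * (b j :: 'a::ring))"
  unfolding sum_distrib_right by (simp only: sum_distrib_left)

lemma delta_sum:
  assumes "finite A" "\<And>i j. i \<in> A \<Longrightarrow> j \<in> A \<Longrightarrow> f i j = (if i = j then d i else (0::'a::comm_monoid_add))"
  shows "(\<Sum>i\<in>A. \<Sum>j\<in>A. f i j) = (\<Sum>i\<in>A. d i)"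
proof -
  have "(\<Sum>i\<in>A. \<Sum>j\<in>A. f i j) = (\<Sum>i\<in>A. \<Sum>j\<in>A. if i = j then d i else 0)"
    using assms(2) by (intro sum.cong refl) auto
  also have "\<dots> = (\<Sum>i\<in>A. d i)" using assms(1) by simp
  finally show ?thesis .
qed

lemma sym_sum:
  fixes f :: "nat \<Rightarrow> nat \<Rightarrow> 'a::real_vector"
  assumes "finite A" "\<And>i j. i \<in> A \<Longrightarrow> j \<in> A \<Longrightarrow> f i j + f j i = (if i = j then 2 *\<^sub>R d i else 0)"
  shows "(\<Sum>i\<in>A. \<Sum>j\<in>A. f i j) = (\<Sum>i\<in>A. d i)"
proof -
  have "2 *\<^sub>R (\<Sum>i\<in>A. \<Sum>j\<in>A. f i j) = (\<Sum>i\<in>A. \<Sum>j\<in>A. f i j) + (\<Sum>i\<in>A. \<Sum>j\<in>A. f j i)"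
    using sum.swap[of "\<lambda>i j. f j i" A A] by (simp add: scaleR_2)
  also have "\<dots> = (\<Sum>i\<in>A. \<Sum>j\<in>A. f i j + f j i)" by (simp add: sum.distrib)
  also have "\<dots> = (\<Sum>i\<in>A. 2 *\<^sub>R d i)" using assms by (intro delta_sum) auto
  also have "\<dots> = 2 *\<^sub>R (\<Sum>i\<in>A. d i)" by (simp add: scaleR_sum_right)
  finally show ?thesis by simp
qed

definition pairs :: "nat \<Rightarrow> nat set set" where "pairs n = {B. B \<subseteq> {1..n} \<and> card B = 2}"

lemma pairs_Suc: "pairs (Suc n) = pairs n \<union> (\<lambda>k. {k, Suc n}) ` {1..n}"
proof (rule set_eqI, rule iffI)
  fix B assume "B \<in> pairs (Suc n)"
  then have B: "B \<subseteq> {1..Suc n}" "card B = 2" by (auto simp: pairs_def)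
  then obtain a b where ab: "B = {a, b}" "a \<noteq> b" by (meson card_2_iff)
  show "B \<in> pairs n \<union> (\<lambda>k. {k, Suc n}) ` {1..n}"
  proof (cases "Suc n \<in> B")
    case False
    have "B \<subseteq> {1..n}"
    proof
      fix x assume "x \<in> B"
      then have "x \<in> {1..Suc n}" "x \<noteq> Suc n" using B(1) False by auto
      then show "x \<in> {1..n}" by simp
    qed
    then show ?thesis using B(2) by (simp add: pairs_def)
  next
    case True
    then have "a = Suc n \<or> b = Suc n" using ab by auto
    then show ?thesis
    proof
      assume a: "a = Suc n"
      then have "b \<in> {1..n}" using ab B(1) by auto
      moreover have "B = {b, Suc n}" using ab a by auto
      ultimately show ?thesis by blast
    next
      assume b: "b = Suc n"
      then have "a \<in> {1..n}" using ab B(1) by auto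
      moreover have "B = {a, Suc n}" using ab b by auto
      ultimately show ?thesis by blast
    qed
  qed
next
  fix B assume "B \<in> pairs n \<union> (\<lambda>k. {k, Suc n}) ` {1..n}"
  then show "B \<in> pairs (Suc n)"
  proof
    assume "B \<in> pairs n" then show ?thesis by (auto simp: pairs_def)
  next
    assume "B \<in> (\<lambda>k. {k, Suc n}) ` {1..n}"
    then obtain k where "k \<in> {1..n}" "B = {k, Suc n}" by blast
    then show ?thesis by (auto simp: pairs_def)
  qed
qed

lemma pairs_finite: "finite (pairs n)"
  unfolding pairs_def by (rule finite_subset[of _ "Pow {1..n}"]) auto

lemma sum_pairs_Suc:
  "(\<Sum>B\<in>pairs (Suc n). \<phi> B) = (\<Sum>B\<in>pairs n. \<phi> B) + (\<Sum>k\<in>{1..n}. \<phi> {k, Suc n})"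
proof -
  have d: "pairs n \<inter> (\<lambda>k. {k, Suc n}) ` {1..n} = {}" by (auto simp: pairs_def)
  have i: "inj_on (\<lambda>k. {k, Suc n}) {1..n}" by (auto simp: inj_on_def doubleton_eq_iff)
  have "sum \<phi> (pairs n \<union> (\<lambda>k. {k, Suc n}) ` {1..n}) = sum \<phi> (pairs n) + sum \<phi> ((\<lambda>k. {k, Suc n}) ` {1..n})"
    by (rule sum.union_disjoint[OF pairs_finite _ d]) simp
  then show ?thesis unfolding pairs_Suc sum.reindex[OF i] o_def by simp
qed

lemma PS1:
  fixes g :: "nat \<Rightarrow> 'a::real_vector"
  shows "(\<Sum>B\<in>pairs n. \<Sum>k\<in>B. g k) = (real n - 1) *\<^sub>R (\<Sum>k\<in>{1..n}. g k)"
proof (induct n)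
  case 0 then show ?case by (simp add: pairs_def)
next
  case (Suc n)
  have "(\<Sum>B\<in>pairs (Suc n). \<Sum>k\<in>B. g k) = (real n - 1) *\<^sub>R (\<Sum>k\<in>{1..n}. g k) + (\<Sum>k\<in>{1..n}. g k + g (Suc n))"
    by (simp add: sum_pairs_Suc Suc)
  also have "\<dots> = (real (Suc n) - 1) *\<^sub>R (\<Sum>k\<in>{1..Suc n}. g k)"
    by (simp add: sum.distrib atLeastAtMostSuc_conv algebra_simps scaleR_add_left scaleR_diff_left sum_constant_scaleR scaleR_2)
  finally show ?case .
qed

lemma PS2:
  fixes h :: "nat \<Rightarrow> nat \<Rightarrow> 'a::real_vector"
  shows "(\<Sum>B\<in>pairs n. \<Sum>k\<in>B. \<Sum>l\<in>B. h k l) = (\<Sum>k\<in>{1..n}. \<Sum>l\<in>{1..n}. h k l) + (real n - 2) *\<^sub>R (\<Sum>k\<in>{1..n}. h k k)"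
proof (induct n)
  case 0 then show ?case by (simp add: pairs_def)
next
  case (Suc n)
  let ?m = "Suc n"
  have "(\<Sum>B\<in>pairs (Suc n). \<Sum>k\<in>B. \<Sum>l\<in>B. h k l) = (\<Sum>k\<in>{1..n}. \<Sum>l\<in>{1..n}. h k l) + (real n - 2) *\<^sub>R (\<Sum>k\<in>{1..n}. h k k)
     + (\<Sum>k\<in>{1..n}. h k k + h k ?m + h ?m k + h ?m ?m)"
    by (simp add: sum_pairs_Suc Suc algebra_simps)
  also have "\<dots> = (\<Sum>k\<in>{1..?m}. \<Sum>l\<in>{1..?m}. h k l) + (real ?m - 2) *\<^sub>R (\<Sum>k\<in>{1..?m}. h k k)"
    by (simp add: sum.distrib atLeastAtMostSuc_conv algebra_simps scaleR_add_left scaleR_diff_left sum_constant_scaleR scaleR_2)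
  finally show ?case .
qed



definition xv :: "(nat \<Rightarrow> 'v \<Rightarrow> 'v) \<Rightarrow> nat set \<Rightarrow> 'v::real_vector linop" where
  "xv e A = (\<Sum>i\<in>A. Eo (e i) * Xo i)"
definition Dv :: "(nat \<Rightarrow> real) \<Rightarrow> (nat \<Rightarrow> 'v \<Rightarrow> 'v) \<Rightarrow> nat set \<Rightarrow> 'v::real_vector linop" where
  "Dv \<mu> e A = (\<Sum>i\<in>A. Eo (e i) * To \<mu> i)"
definition zz :: "(nat \<Rightarrow> real) \<Rightarrow> nat \<Rightarrow> 'v::real_vector linop" where
  "zz \<mu> i = - (2 *\<^sub>R (Xo i * To \<mu> i) + 1 + (2 * \<mu> i) *\<^sub>R Ro i)"

locale DD =
  fixes \<mu> :: "nat \<Rightarrow> real" and e :: "nat \<Rightarrow> 'v::real_vector \<Rightarrow> 'v" and n :: nat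
  assumes lin_e: "\<forall>i\<in>{1..n}. linear (e i)"
    and cl: "\<forall>i\<in>{1..n}. \<forall>j\<in>{1..n}. \<forall>v. e i (e j v) + e j (e i v) = (if i = j then (-2) *\<^sub>R v else 0)"
begin

abbreviation "E i \<equiv> (Eo (e i) :: 'v linop)"
abbreviation "X i \<equiv> (Xo i :: 'v linop)"
abbreviation "T i \<equiv> (To \<mu> i :: 'v linop)"
abbreviation "R i \<equiv> (Ro i :: 'v linop)"

lemma linE: "i \<in> {1..n} \<Longrightarrow> linear (e i)" using lin_e by blast

lemma EEi: "i \<in> {1..n} \<Longrightarrow> E i * E i = - 1"
proof -
  assume i: "i \<in> {1..n}"
  have "E i * E i + E i * E i = (-2) *\<^sub>R 1"
    by (rule EE) (use i linE cl in auto)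
  then have "2 *\<^sub>R (E i * E i) = 2 *\<^sub>R (- 1)" by (simp add: scaleR_2)
  then show ?thesis using scaleR_left_imp_eq[of 2 "E i * E i" "- 1"] by simp
qed

lemma EEa: "i \<in> {1..n} \<Longrightarrow> j \<in> {1..n} \<Longrightarrow> i \<noteq> j \<Longrightarrow> E j * E i = - (E i * E j)"
proof -
  assume i: "i \<in> {1..n}" and j: "j \<in> {1..n}" and ij: "i \<noteq> j"
  have "E i * E j + E j * E i = 0"
    by (rule EE0) (use i j ij linE cl in auto)
  then show ?thesis by (simp add: eq_neg_iff_add_eq_0 add.commute)
qed

lemma EEi': "i \<in> {1..n} \<Longrightarrow> E i * (E i * w) = - w"
  by (simp add: mult.assoc[symmetric] EEi)
lemma EEa': "i \<in> {1..n} \<Longrightarrow> j \<in> {1..n} \<Longrightarrow> i \<noteq> j \<Longrightarrow> E j * (E i * w) = - (E i * (E j * w))"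
  by (simp add: mult.assoc[symmetric] EEa[of i j])

lemma XE': "i \<in> {1..n} \<Longrightarrow> X j * (E i * w) = E i * (X j * w)"
  by (simp add: mult.assoc[symmetric] EX linE)
lemma TE': "i \<in> {1..n} \<Longrightarrow> T j * (E i * w) = E i * (T j * w)"
  by (simp add: mult.assoc[symmetric] ET linE)
lemma RE': "i \<in> {1..n} \<Longrightarrow> R j * (E i * w) = E i * (R j * w)"
  by (simp add: mult.assoc[symmetric] ER linE)
lemma RAE': "i \<in> {1..n} \<Longrightarrow> RAo A * (E i * w) = E i * (RAo A * w)"
  by (simp add: mult.assoc[symmetric] ERA linE)
lemma XE: "i \<in> {1..n} \<Longrightarrow> X j * E i = E i * X j"
  by (simp add: EX linE)
lemma TE: "i \<in> {1..n} \<Longrightarrow> T j * E i = E i * T j"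
  by (simp add: ET linE)

lemma RE: "i \<in> {1..n} \<Longrightarrow> R j * E i = E i * R j"
  by (simp add: ER linE)

lemma zzE: "i \<in> {1..n} \<Longrightarrow> zz \<mu> k * E i = E i * zz \<mu> k"
  by (simp add: zz_def algebra_simps XE' TE' RE' XE TE RE)


lemma TX': "i \<noteq> j \<Longrightarrow> T i * (X j * w) = X j * (T i * w)"
  by (simp add: mult.assoc[symmetric] TX)
lemma TXi': "T i * (X i * w) = X i * (T i * w) + w + (2 * \<mu> i) *\<^sub>R (R i * w)"
  by (simp only: mult.assoc[symmetric] TXi) (simp add: algebra_simps)
lemma RX': "R i * (X i * w) = - (X i * (R i * w))"
  by (simp add: mult.assoc[symmetric] RX)
lemma RT': "R i * (T i * w) = - (T i * (R i * w))"
  by (simp add: mult.assoc[symmetric] RT)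
lemma RR': "R i * (R i * w) = w"
  by (simp add: mult.assoc[symmetric] RR)
lemma RXc': "i \<noteq> j \<Longrightarrow> R i * (X j * w) = X j * (R i * w)"
  by (simp add: mult.assoc[symmetric] RXc)
lemma RTc': "i \<noteq> j \<Longrightarrow> R i * (T j * w) = T j * (R i * w)"
  by (simp add: mult.assoc[symmetric] RTc)

lemma zzX: "zz \<mu> i * X i - X i * zz \<mu> i = - (2 *\<^sub>R X i)"
  by (simp add: zz_def algebra_simps TXi TXi' RX RX' scaleR_2 mult_2 scaleR_add_left)

lemma zzT: "zz \<mu> i * T i - T i * zz \<mu> i = 2 *\<^sub>R T i"
  by (simp add: zz_def algebra_simps TXi TXi' RT RT' scaleR_2 mult_2 scaleR_add_left)

lemma XX': "X i * (X j * w) = X j * (X i * w)"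
  by (simp add: mult.assoc[symmetric] XX)
lemma TT': "T i * (T j * w) = T j * (T i * w)"
  by (simp add: mult.assoc[symmetric] TT)

lemma zzXc: assumes "k \<noteq> i" shows "zz \<mu> k * X i - X i * zz \<mu> k = 0"
proof -
  have "i \<noteq> k" using assms by simp
  then show ?thesis using assms by (simp add: zz_def algebra_simps TX TX' RXc RXc' XX XX')
qed

lemma zzTc: assumes "k \<noteq> i" shows "zz \<mu> k * T i - T i * zz \<mu> k = 0"
proof -
  have "i \<noteq> k" using assms by simp
  then show ?thesis using assms by (simp add: zz_def algebra_simps RTc RTc' TT TT' TX TX')
qed


abbreviation "N \<equiv> {1..n}"

lemma finA: "A \<subseteq> N \<Longrightarrow> finite A" using finite_subset by blast

lemma xD_sum: assumes "A \<subseteq> N"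
  shows "xv e A * Dv \<mu> e A = (\<Sum>i\<in>A. \<Sum>j\<in>A. E i * (E j * (X i * T j)))"
  unfolding xv_def Dv_def sum_prod
  by (intro sum.cong refl) (use assms in \<open>auto simp: mult.assoc XE'\<close>)

lemma Dx_sum: assumes "A \<subseteq> N"
  shows "Dv \<mu> e A * xv e A = (\<Sum>i\<in>A. \<Sum>j\<in>A. E j * (E i * (T j * X i)))"
  unfolding xv_def Dv_def sum_prod
  by (subst sum.swap, intro sum.cong refl) (use assms in \<open>auto simp: mult.assoc TE'\<close>)

definition "ZA A = (\<Sum>k\<in>A. zz \<mu> k)"

lemma Zsum: assumes "A \<subseteq> N"
  shows "xv e A * Dv \<mu> e A + Dv \<mu> e A * xv e A = ZA A"
proof -
  have "xv e A * Dv \<mu> e A + Dv \<mu> e A * xv e A =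
     (\<Sum>i\<in>A. \<Sum>j\<in>A. E i * (E j * (X i * T j)) + E j * (E i * (T j * X i)))"
    by (simp add: xD_sum[OF assms] Dx_sum[OF assms] sum.distrib)
  also have "\<dots> = (\<Sum>i\<in>A. zz \<mu> i)"
  proof (rule delta_sum[OF finA[OF assms]])
    fix i j assume ij: "i \<in> A" "j \<in> A"
    then have iN: "i \<in> N" and jN: "j \<in> N" using assms by auto
    show "E i * (E j * (X i * T j)) + E j * (E i * (T j * X i)) = (if i = j then zz \<mu> i else 0)"
    proof (cases "i = j")
      case True
      then show ?thesis using iN
        by (simp add: EEi EEi' TXi zz_def algebra_simps scaleR_2 mult_2 scaleR_add_left)
    next
      case False
      then show ?thesis using iN jN by (simp add: EEa'[OF iN jN False] TX[OF not_sym[OF False]])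
    qed
  qed
  finally show ?thesis by (simp add: ZA_def)
qed

lemma xx_sum: assumes "A \<subseteq> N"
  shows "xv e A * xv e A = - (\<Sum>i\<in>A. X i * X i)"
proof -
  have "xv e A * xv e A = (\<Sum>i\<in>A. \<Sum>j\<in>A. E i * (E j * (X i * X j)))"
    unfolding xv_def sum_prod
    by (intro sum.cong refl) (use assms in \<open>auto simp: mult.assoc XE'\<close>)
  also have "\<dots> = (\<Sum>i\<in>A. - (X i * X i))"
  proof (rule sym_sum[OF finA[OF assms]])
    fix i j assume ij: "i \<in> A" "j \<in> A"
    then have iN: "i \<in> N" and jN: "j \<in> N" using assms by auto
    show "E i * (E j * (X i * X j)) + E j * (E i * (X j * X i)) = (if i = j then 2 *\<^sub>R - (X i * X i) else 0)"
    proof (cases "i = j")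
      case True
      then show ?thesis using iN by (simp add: EEi' scaleR_2)
    next
      case False
      then show ?thesis using iN jN by (simp add: EEa'[OF iN jN False] XX[of j i])
    qed
  qed
  finally show ?thesis by (simp add: sum_negf)
qed

lemma DD_sum: assumes "A \<subseteq> N"
  shows "Dv \<mu> e A * Dv \<mu> e A = - (\<Sum>i\<in>A. T i * T i)"
proof -
  have "Dv \<mu> e A * Dv \<mu> e A = (\<Sum>i\<in>A. \<Sum>j\<in>A. E i * (E j * (T i * T j)))"
    unfolding Dv_def sum_prod
    by (intro sum.cong refl) (use assms in \<open>auto simp: mult.assoc TE'\<close>)
  also have "\<dots> = (\<Sum>i\<in>A. - (T i * T i))"
  proof (rule sym_sum[OF finA[OF assms]])
    fix i j assume ij: "i \<in> A" "j \<in> A"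
    then have iN: "i \<in> N" and jN: "j \<in> N" using assms by auto
    show "E i * (E j * (T i * T j)) + E j * (E i * (T j * T i)) = (if i = j then 2 *\<^sub>R - (T i * T i) else 0)"
    proof (cases "i = j")
      case True
      then show ?thesis using iN by (simp add: EEi' scaleR_2)
    next
      case False
      then show ?thesis using iN jN by (simp add: EEa'[OF iN jN False] TT[of \<mu> j i])
    qed
  qed
  finally show ?thesis by (simp add: sum_negf)
qed

lemma ZX: assumes "A \<subseteq> N"
  shows "ZA A * xv e A - xv e A * ZA A = - (2 *\<^sub>R xv e A)"
proof -
  have "ZA A * xv e A - xv e A * ZA A = (\<Sum>k\<in>A. \<Sum>i\<in>A. zz \<mu> k * (E i * X i) - E i * X i * zz \<mu> k)"
    unfolding ZA_def xv_def sum_prod by (subst (2) sum.swap) (simp add: sum_subtractf)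
  also have "\<dots> = (\<Sum>k\<in>A. - (2 *\<^sub>R (E k * X k)))"
  proof (rule delta_sum[OF finA[OF assms]])
    fix k i assume ki: "k \<in> A" "i \<in> A"
    then have iN: "i \<in> N" using assms by auto
    have "zz \<mu> k * (E i * X i) - E i * X i * zz \<mu> k = E i * (zz \<mu> k * X i - X i * zz \<mu> k)"
      by (simp add: mult.assoc[symmetric] zzE[OF iN]) (simp add: mult.assoc right_diff_distrib)
    then show "zz \<mu> k * (E i * X i) - E i * X i * zz \<mu> k = (if k = i then - (2 *\<^sub>R (E k * X k)) else 0)"
      by (cases "k = i") (simp_all add: zzX zzXc)
  qed
  finally show ?thesis by (simp add: xv_def sum_negf scaleR_sum_right)
qed

lemma ZD: assumes "A \<subseteq> N"
  shows "ZA A * Dv \<mu> e A - Dv \<mu> e A * ZA A = 2 *\<^sub>R Dv \<mu> e A"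
proof -
  have "ZA A * Dv \<mu> e A - Dv \<mu> e A * ZA A = (\<Sum>k\<in>A. \<Sum>i\<in>A. zz \<mu> k * (E i * T i) - E i * T i * zz \<mu> k)"
    unfolding ZA_def Dv_def sum_prod by (subst (2) sum.swap) (simp add: sum_subtractf)
  also have "\<dots> = (\<Sum>k\<in>A. 2 *\<^sub>R (E k * T k))"
  proof (rule delta_sum[OF finA[OF assms]])
    fix k i assume ki: "k \<in> A" "i \<in> A"
    then have iN: "i \<in> N" using assms by auto
    have "zz \<mu> k * (E i * T i) - E i * T i * zz \<mu> k = E i * (zz \<mu> k * T i - T i * zz \<mu> k)"
      by (simp add: mult.assoc[symmetric] zzE[OF iN]) (simp add: mult.assoc right_diff_distrib)
    then show "zz \<mu> k * (E i * T i) - E i * T i * zz \<mu> k = (if k = i then 2 *\<^sub>R (E k * T k) else 0)"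
      by (cases "k = i") (simp_all add: zzT zzTc)
  qed
  finally show ?thesis by (simp add: Dv_def scaleR_sum_right)
qed


definition "S2 A = xv e A * Dv \<mu> e A - Dv \<mu> e A * xv e A - 1"

lemma S2_osp: assumes "A \<subseteq> N"
  shows "S2 A * xv e A = - (xv e A * S2 A)" "S2 A * Dv \<mu> e A = - (Dv \<mu> e A * S2 A)"
   "S2 A * S2 A = 2 *\<^sub>R S2 A + (ZA A + 2 *\<^sub>R 1) * (ZA A + 2 *\<^sub>R 1) - 1 - 4 *\<^sub>R (xv e A * (xv e A * (Dv \<mu> e A * Dv \<mu> e A)))"
proof -
  have a1: "Dv \<mu> e A * xv e A = ZA A - xv e A * Dv \<mu> e A" using Zsum[OF assms] by (simp add: algebra_simps)
  have a2: "xv e A * ZA A = ZA A * xv e A + 2 *\<^sub>R xv e A" using ZX[OF assms] by (simp add: algebra_simps)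
  have a3: "Dv \<mu> e A * ZA A = ZA A * Dv \<mu> e A - 2 *\<^sub>R Dv \<mu> e A" using ZD[OF assms] by (simp add: algebra_simps)
  note o = osp[OF a1 a2 a3]
  show "S2 A * xv e A = - (xv e A * S2 A)" "S2 A * Dv \<mu> e A = - (Dv \<mu> e A * S2 A)"
   "S2 A * S2 A = 2 *\<^sub>R S2 A + (ZA A + 2 *\<^sub>R 1) * (ZA A + 2 *\<^sub>R 1) - 1 - 4 *\<^sub>R (xv e A * (xv e A * (Dv \<mu> e A * Dv \<mu> e A)))"
    unfolding S2_def using o by auto
qed

lemma four: "4 *\<^sub>R (w::'a::real_vector) = w + (w + (w + w))"
  using scaleR_add_left[of 2 2 w] by (simp add: scaleR_2 add.assoc)

definition "Hf k l = 4 *\<^sub>R (E k * (E l * (X k * T l))) + zz \<mu> k * zz \<mu> l - 4 *\<^sub>R (X k * (X k * (T l * T l)))"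

lemma S2sq: assumes "A \<subseteq> N"
  shows "S2 A * S2 A = (\<Sum>k\<in>A. \<Sum>l\<in>A. Hf k l) + (\<Sum>k\<in>A. 2 *\<^sub>R zz \<mu> k) + 1"
proof -
  have a1: "Dv \<mu> e A * xv e A = ZA A - xv e A * Dv \<mu> e A" using Zsum[OF assms] by (simp add: algebra_simps)
  have "S2 A * S2 A = 4 *\<^sub>R (xv e A * Dv \<mu> e A) + ZA A * ZA A + 2 *\<^sub>R ZA A + 1 - 4 *\<^sub>R (xv e A * (xv e A * (Dv \<mu> e A * Dv \<mu> e A)))"
    unfolding S2_osp(3)[OF assms] unfolding S2_def a1
    by (simp add: algebra_simps scaleR_2 four)
  also have "xv e A * (xv e A * (Dv \<mu> e A * Dv \<mu> e A)) = (\<Sum>k\<in>A. \<Sum>l\<in>A. X k * (X k * (T l * T l)))"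
    by (simp add: mult.assoc[symmetric]) (simp add: xx_sum[OF assms] DD_sum[OF assms] mult.assoc sum_prod)
  also have "ZA A * ZA A = (\<Sum>k\<in>A. \<Sum>l\<in>A. zz \<mu> k * zz \<mu> l)" unfolding ZA_def sum_prod ..
  also have "xv e A * Dv \<mu> e A = (\<Sum>k\<in>A. \<Sum>l\<in>A. E k * (E l * (X k * T l)))" by (rule xD_sum[OF assms])
  finally show ?thesis
    by (simp add: Hf_def ZA_def sum.distrib sum_subtractf scaleR_sum_right algebra_simps)
qed


lemma Hkk: assumes "k \<in> N"
  shows "Hf k k + 2 *\<^sub>R zz \<mu> k = 4 *\<^sub>R ((\<mu> k * \<mu> k) *\<^sub>R 1) - 1"
  using assms
  by (simp add: Hf_def zz_def EEi' algebra_simps TXi TXi' RX RX' RT RT' RR RR' scaleR_2 mult_2 scaleR_add_left four)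
    (subst coll(1), simp)


lemma Qsum: "\<exists>c. (\<Sum>B\<in>pairs n. S2 B * S2 B) = S2 N * S2 N + c *\<^sub>R 1"
proof -
  define SS where "SS = (\<Sum>k\<in>N. \<Sum>l\<in>N. Hf k l)"
  define SH where "SH = (\<Sum>k\<in>N. Hf k k)"
  define SG where "SG = (\<Sum>k\<in>N. 2 *\<^sub>R (zz \<mu> k :: 'v linop))"
  define c0 where "c0 = (\<Sum>k\<in>N. 4 * (\<mu> k * \<mu> k) - 1)"
  have f1: "(\<Sum>B\<in>pairs n. S2 B * S2 B) = SS + (real n - 2) *\<^sub>R SH + (real n - 1) *\<^sub>R SG + real (card (pairs n)) *\<^sub>R 1"
  proof -
    have "(\<Sum>B\<in>pairs n. S2 B * S2 B) = (\<Sum>B\<in>pairs n. (\<Sum>k\<in>B. \<Sum>l\<in>B. Hf k l) + (\<Sum>k\<in>B. 2 *\<^sub>R zz \<mu> k) + 1)"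
      by (intro sum.cong refl S2sq) (auto simp: pairs_def)
    also have "\<dots> = (\<Sum>B\<in>pairs n. \<Sum>k\<in>B. \<Sum>l\<in>B. Hf k l) + (\<Sum>B\<in>pairs n. \<Sum>k\<in>B. 2 *\<^sub>R zz \<mu> k) + (\<Sum>B\<in>pairs n. 1)"
      by (simp add: sum.distrib)
    also have "\<dots> = SS + (real n - 2) *\<^sub>R SH + (real n - 1) *\<^sub>R SG + real (card (pairs n)) *\<^sub>R 1"
      unfolding PS1 PS2 SS_def SH_def SG_def by (simp add: sum_constant_scaleR)
    finally show ?thesis .
  qed
  have f2: "S2 N * S2 N = SS + SG + 1" unfolding SS_def SG_def by (rule S2sq) simp
  have f3: "SH + SG = c0 *\<^sub>R 1"
  proof -
    have "SH + SG = (\<Sum>k\<in>N. Hf k k + 2 *\<^sub>R zz \<mu> k)" by (simp add: SH_def SG_def sum.distrib)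
    also have "\<dots> = (\<Sum>k\<in>N. (4 * (\<mu> k * \<mu> k) - 1) *\<^sub>R 1)"
      by (intro sum.cong refl) (simp add: Hkk scaleR_diff_left)
    also have "\<dots> = c0 *\<^sub>R 1" by (simp add: c0_def scaleR_sum_left)
    finally show ?thesis .
  qed
  have sh: "SH = c0 *\<^sub>R 1 - SG" using f3 by (simp add: algebra_simps)
  have "(\<Sum>B\<in>pairs n. S2 B * S2 B) = S2 N * S2 N + ((real n - 2) * c0 + real (card (pairs n)) - 1) *\<^sub>R 1"
    unfolding f1 f2 sh by (simp add: algebra_simps scaleR_diff_left scaleR_add_left scaleR_2)
  then show ?thesis by blast
qed


lemma anti_gen:
  assumes A: "A \<subseteq> N" and C: "C \<subseteq> N" and AC: "A \<inter> C = {}"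
    and YE: "\<And>i j. i \<in> N \<Longrightarrow> Y j * E i = E i * Y j"
    and YE2: "\<And>i j. i \<in> N \<Longrightarrow> Y2 j * E i = E i * Y2 j"
    and YY: "\<And>i j. i \<in> A \<Longrightarrow> j \<in> C \<Longrightarrow> Y i * Y2 j = Y2 j * Y i"
  shows "(\<Sum>i\<in>A. E i * Y i) * (\<Sum>j\<in>C. E j * Y2 j) = - ((\<Sum>j\<in>C. E j * Y2 j) * (\<Sum>i\<in>A. E i * Y i))"
proof -
  have YE': "Y j * (E i * w) = E i * (Y j * w)" if "i \<in> N" for i j w
    by (simp add: mult.assoc[symmetric] YE[OF that])
  have YE2': "Y2 j * (E i * w) = E i * (Y2 j * w)" if "i \<in> N" for i j w
    by (simp add: mult.assoc[symmetric] YE2[OF that])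
  have "(\<Sum>i\<in>A. E i * Y i) * (\<Sum>j\<in>C. E j * Y2 j) = (\<Sum>i\<in>A. \<Sum>j\<in>C. E i * (E j * (Y i * Y2 j)))"
    unfolding sum_prod
  proof (intro sum.cong refl)
    fix i j assume "i \<in> A" "j \<in> C"
    then have "j \<in> N" using C by auto
    then show "E i * Y i * (E j * Y2 j) = E i * (E j * (Y i * Y2 j))"
      by (simp add: mult.assoc YE')
  qed
  also have "\<dots> = (\<Sum>j\<in>C. \<Sum>i\<in>A. - (E j * Y2 j * (E i * Y i)))"
    apply (subst sum.swap)
  proof (intro sum.cong refl)
    fix i j assume ij: "i \<in> A" "j \<in> C"
    then have iN: "i \<in> N" and jN: "j \<in> N" and ne: "i \<noteq> j" using A C AC by auto
    have "E j * Y2 j * (E i * Y i) = E j * (E i * (Y2 j * Y i))"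
      using iN by (simp add: mult.assoc YE2')
    also have "\<dots> = - (E i * (E j * (Y i * Y2 j)))"
      by (simp add: EEa'[OF iN jN ne] YY[OF ij])
    finally show "E i * (E j * (Y i * Y2 j)) = - (E j * Y2 j * (E i * Y i))" by simp
  qed
  also have "\<dots> = - ((\<Sum>j\<in>C. E j * Y2 j) * (\<Sum>i\<in>A. E i * Y i))"
    unfolding sum_prod by (simp add: sum_negf)
  finally show ?thesis .
qed

lemma anti:
  assumes A: "A \<subseteq> N" and C: "C \<subseteq> N" and AC: "A \<inter> C = {}"
  shows "xv e A * xv e C = - (xv e C * xv e A)" "Dv \<mu> e A * xv e C = - (xv e C * Dv \<mu> e A)"
    "xv e A * Dv \<mu> e C = - (Dv \<mu> e C * xv e A)" "Dv \<mu> e A * Dv \<mu> e C = - (Dv \<mu> e C * Dv \<mu> e A)"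
proof -
  have ne: "\<And>i j. i \<in> A \<Longrightarrow> j \<in> C \<Longrightarrow> i \<noteq> j" using AC by auto
  have ne': "\<And>i j. i \<in> A \<Longrightarrow> j \<in> C \<Longrightarrow> j \<noteq> i" using AC by auto
  show "xv e A * xv e C = - (xv e C * xv e A)" unfolding xv_def
    by (rule anti_gen[OF A C AC]) (simp_all add: XE XX)
  show "Dv \<mu> e A * xv e C = - (xv e C * Dv \<mu> e A)" unfolding xv_def Dv_def
    by (rule anti_gen[OF A C AC]) (simp_all add: XE TE TX ne)
  show "xv e A * Dv \<mu> e C = - (Dv \<mu> e C * xv e A)" unfolding xv_def Dv_def
    by (rule anti_gen[OF A C AC]) (simp_all add: XE TE TX ne')
  show "Dv \<mu> e A * Dv \<mu> e C = - (Dv \<mu> e C * Dv \<mu> e A)" unfolding Dv_def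
    by (rule anti_gen[OF A C AC]) (simp_all add: TE TT)
qed

lemma RA_x: assumes "A \<subseteq> N"
  shows "RAo A * xv e A = - (xv e A * RAo A)" "RAo A * Dv \<mu> e A = - (Dv \<mu> e A * RAo A)"
proof -
  have f: "finite A" using finA[OF assms] .
  have "RAo A * xv e A = (\<Sum>i\<in>A. - (E i * X i * RAo A))" unfolding xv_def sum_distrib_left
    by (intro sum.cong refl) (use assms f in \<open>auto simp: RAE' linE mult.assoc RAX\<close>)
  then show "RAo A * xv e A = - (xv e A * RAo A)" by (simp add: xv_def sum_negf sum_distrib_right)
  have "RAo A * Dv \<mu> e A = (\<Sum>i\<in>A. - (E i * T i * RAo A))" unfolding Dv_def sum_distrib_left
    by (intro sum.cong refl) (use assms f in \<open>auto simp: RAE' linE mult.assoc RAT\<close>)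
  then show "RAo A * Dv \<mu> e A = - (Dv \<mu> e A * RAo A)" by (simp add: Dv_def sum_negf sum_distrib_right)
qed

lemma RA_xc: assumes "C \<subseteq> N" "A \<inter> C = {}"
  shows "RAo A * xv e C = xv e C * RAo A" "RAo A * Dv \<mu> e C = Dv \<mu> e C * RAo A"
proof -
  have "RAo A * xv e C = (\<Sum>i\<in>C. E i * X i * RAo A)" unfolding xv_def sum_distrib_left
  proof (intro sum.cong refl)
    fix i assume i: "i \<in> C"
    then have iN: "i \<in> N" and iA: "i \<notin> A" using assms by auto
    show "RAo A * (E i * X i) = E i * X i * RAo A" by (simp add: RAE'[OF iN] RAXc[OF iA] mult.assoc)
  qed
  then show "RAo A * xv e C = xv e C * RAo A" by (simp add: xv_def sum_distrib_right)
  have "RAo A * Dv \<mu> e C = (\<Sum>i\<in>C. E i * T i * RAo A)" unfolding Dv_def sum_distrib_left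
  proof (intro sum.cong refl)
    fix i assume i: "i \<in> C"
    then have iN: "i \<in> N" and iA: "i \<notin> A" using assms by auto
    show "RAo A * (E i * T i) = E i * T i * RAo A" by (simp add: RAE'[OF iN] RATc[OF iA] mult.assoc)
  qed
  then show "RAo A * Dv \<mu> e C = Dv \<mu> e C * RAo A" by (simp add: Dv_def sum_distrib_right)
qed


lemma ac: "a * b = c \<Longrightarrow> a * (b * w) = c * (w::'a::semigroup_mult)"
  by (simp add: mult.assoc[symmetric])

lemma S2_c: assumes A: "A \<subseteq> N" and C: "C \<subseteq> N" and AC: "A \<inter> C = {}"
  shows "S2 A * xv e C = xv e C * S2 A" "S2 A * Dv \<mu> e C = Dv \<mu> e C * S2 A"
proof -
  note a = anti[OF A C AC]
  note b = a(1)[THEN ac] a(2)[THEN ac] a(3)[THEN ac] a(4)[THEN ac]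
  show "S2 A * xv e C = xv e C * S2 A" "S2 A * Dv \<mu> e C = Dv \<mu> e C * S2 A"
    unfolding S2_def by (simp_all add: algebra_simps a b)
qed

lemma RA_S2: assumes "A \<subseteq> N" shows "RAo A * S2 A = S2 A * RAo A"
proof -
  note a = RA_x[OF assms]
  note b = a(1)[THEN ac] a(2)[THEN ac]
  show ?thesis unfolding S2_def by (simp add: algebra_simps a b)
qed

definition "G2 A = S2 A * RAo A"

lemma G2_comm: assumes A: "A \<subseteq> N"
  shows "G2 A * xv e N = xv e N * G2 A" "G2 A * Dv \<mu> e N = Dv \<mu> e N * G2 A"
proof -
  have C: "N - A \<subseteq> N" and AC: "A \<inter> (N - A) = {}" by auto
  have xs: "xv e N = xv e (N - A) + xv e A"
    unfolding xv_def by (rule sum.subset_diff[OF A]) simp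
  have ds: "Dv \<mu> e N = Dv \<mu> e (N - A) + Dv \<mu> e A"
    unfolding Dv_def by (rule sum.subset_diff[OF A]) simp
  note r = RA_x[OF A] RA_xc[OF C AC] S2_osp(1,2)[OF A] S2_c[OF A C AC]
  note r2 = r(1)[THEN ac] r(2)[THEN ac] r(3)[THEN ac] r(4)[THEN ac] r(5)[THEN ac] r(6)[THEN ac]
     r(7)[THEN ac] r(8)[THEN ac]
  show "G2 A * xv e N = xv e N * G2 A" "G2 A * Dv \<mu> e N = Dv \<mu> e N * G2 A"
    unfolding G2_def xs ds by (simp_all add: algebra_simps r r2 del: One_nat_def)
qed

lemma G2_S2N: assumes A: "A \<subseteq> N"
  shows "G2 A * (S2 N * S2 N) = S2 N * S2 N * G2 A"
proof -
  note r = G2_comm[OF A]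
  note r2 = r(1)[THEN ac] r(2)[THEN ac]
  have "G2 A * S2 N = S2 N * G2 A" unfolding S2_def by (simp add: algebra_simps r r2 del: One_nat_def)
  then show ?thesis by (metis mult.assoc)
qed

lemma G2sq: assumes "B \<subseteq> N" shows "G2 B * G2 B = S2 B * S2 B"
proof -
  have "G2 B * G2 B = S2 B * (RAo B * S2 B) * RAo B" by (simp add: G2_def mult.assoc)
  also have "\<dots> = S2 B * S2 B * (RAo B * RAo B)" by (simp add: RA_S2[OF assms] mult.assoc)
  finally show ?thesis by (simp add: RARA)
qed

definition "Gam A = (1/2::real) *\<^sub>R G2 A"
definition "Qop = (\<Sum>B\<in>pairs n. Gam B * Gam B)"

lemma Q_comm: assumes A: "A \<subseteq> N" shows "Qop * Gam A = Gam A * Qop"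
proof -
  obtain c where c: "(\<Sum>B\<in>pairs n. S2 B * S2 B) = S2 N * S2 N + c *\<^sub>R 1" using Qsum by blast
  have "Qop = (1/4::real) *\<^sub>R (\<Sum>B\<in>pairs n. G2 B * G2 B)"
    unfolding Qop_def Gam_def by (simp add: scaleR_sum_right)
  also have "(\<Sum>B\<in>pairs n. G2 B * G2 B) = (\<Sum>B\<in>pairs n. S2 B * S2 B)"
    by (intro sum.cong refl G2sq) (auto simp: pairs_def)
  finally have q: "Qop = (1/4::real) *\<^sub>R (S2 N * S2 N + c *\<^sub>R 1)" using c by simp
  show ?thesis unfolding q Gam_def
    by (simp add: algebra_simps G2_S2N[OF A] del: One_nat_def)
qed


lemma rep_xv: assumes "A \<subseteq> N" shows "rep (xv e A) = vecx e A"
proof (intro ext)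
  fix F \<alpha>
  show "rep (xv e A) F \<alpha> = vecx e A F \<alpha>"
    unfolding xv_def rep_sum vecx_def
    by (intro sum.cong refl) (use assms in \<open>auto simp: rep_times rep_Eo linE Xo.rep_eq\<close>)
qed

lemma rep_Dv: assumes "A \<subseteq> N" shows "rep (Dv \<mu> e A) = dirac \<mu> e A"
proof (intro ext)
  fix F \<alpha>
  show "rep (Dv \<mu> e A) F \<alpha> = dirac \<mu> e A F \<alpha>"
    unfolding Dv_def rep_sum dirac_def
    by (intro sum.cong refl) (use assms in \<open>auto simp: rep_times rep_Eo linE To.rep_eq\<close>)
qed

lemma rep_Gam: assumes "A \<subseteq> N" shows "rep (Gam A) F = GammaA \<mu> e A F"
  unfolding Gam_def G2_def S2_def GammaA_def SA_def
  by (simp add: scaleR_linop.rep_eq rep_times minus_linop.rep_eq one_linop.rep_eq RAo.rep_eq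
      rep_xv[OF assms] rep_Dv[OF assms])

lemma rep_Q: "rep Qop F = Qn \<mu> e n F"
proof (intro ext)
  fix \<alpha>
  show "rep Qop F \<alpha> = Qn \<mu> e n F \<alpha>"
    unfolding Qop_def rep_sum Qn_def pairs_def[symmetric]
    by (intro sum.cong refl) (auto simp: rep_times rep_Gam pairs_def)
qed

lemma main: assumes "A \<subseteq> N" shows "Qn \<mu> e n (GammaA \<mu> e A F) = GammaA \<mu> e A (Qn \<mu> e n F)"
proof -
  have "Qn \<mu> e n (GammaA \<mu> e A F) = rep (Qop * Gam A) F"
    by (simp add: rep_times rep_Gam[OF assms] rep_Q)
  also have "\<dots> = rep (Gam A * Qop) F" by (simp add: Q_comm[OF assms])
  also have "\<dots> = GammaA \<mu> e A (Qn \<mu> e n F)"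
    by (simp add: rep_times rep_Gam[OF assms] rep_Q)
  finally show ?thesis .
qed

end

theorem lemma7:
  fixes n :: nat and \<mu> :: "nat \<Rightarrow> real" and e :: "nat \<Rightarrow> 'v::real_vector \<Rightarrow> 'v"
    and A :: "nat set" and F :: "'v pv"
  assumes "n \<ge> 1"
    and "\<forall>i\<in>{1..n}. \<mu> i > 0"
    and "\<forall>i\<in>{1..n}. linear (e i)"
    and "\<forall>i\<in>{1..n}. \<forall>j\<in>{1..n}. \<forall>v. e i (e j v) + e j (e i v) = (if i = j then (-2) *\<^sub>R v else 0)"
    and "A \<subseteq> {1..n}"
    and "is_poly n F"
  shows "Qn \<mu> e n (GammaA \<mu> e A F) = GammaA \<mu> e A (Qn \<mu> e n F)"
proof -
  interpret DD \<mu> e n using assms(3,4) by unfold_locales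
  show ?thesis by (rule main[OF assms(5)])
qed

end
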